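(* Let $N>0$, $m>0$, $F>0$, $\alpha>0$, $w>0$ be fixed with $Nm>\alpha$, and for $g\geq 0$, $\tau\in(0,1)$, $L_g\geq 0$ define \[ L=\frac{N\left[(1-\tau)(mL_g+\alpha F)+(mg+F)mN\right]}{\alpha+(Nm-\alpha)\tau},\qquad q=\frac{(1-\tau)(L+L_g-\alpha g)}{\left(Nm+\alpha(1-\tau)\right)(L+L_g)}, \] \[ p=\frac{L+L_g}{L+L_g-\alpha g}\left(mw+\frac{\alpha(1-\tau)w}{N}\right),\qquad \Pi=\left((L+L_g)q+g\right)(p-mw)-Fw, \] regarded as functions of $(g,\tau,L_g)$. Then \[ \frac{\partial \Pi}{\partial g}>0,\qquad \frac{\partial \Pi}{\partial \tau}<0 . \]
   Context: These are the symmetric-equilibrium private employment $L$, per-capita consumption $q$ of each variety, price $p$, and profit $\Pi$ of each firm in a monopolistic-competition general equilibrium model with a measure $N$ of firms, marginal and fixed labor inputs $m$ and $F$, CARA utility parameter $\alpha$, nominal wage $w$, income tax rate $\tau$, government purchase $g$ of each variety, and government employment $L_g$. Partial derivatives are taken in $(g,\tau,L_g)$ with other parameters fixed. *)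

theory Defs
  imports Complex_Main
begin

definition Lpriv :: "real \<Rightarrow> real \<Rightarrow> real \<Rightarrow> real \<Rightarrow> real \<Rightarrow> real \<Rightarrow> real \<Rightarrow> real" where
  "Lpriv N m F \<alpha> g \<tau> Lg =
     N * ((1 - \<tau>) * (m * Lg + \<alpha> * F) + (m * g + F) * m * N) / (\<alpha> + (N * m - \<alpha>) * \<tau>)"

definition qcons :: "real \<Rightarrow> real \<Rightarrow> real \<Rightarrow> real \<Rightarrow> real \<Rightarrow> real \<Rightarrow> real \<Rightarrow> real" where
  "qcons N m F \<alpha> g \<tau> Lg =
     (let L = Lpriv N m F \<alpha> g \<tau> Lg in
      (1 - \<tau>) * (L + Lg - \<alpha> * g) / ((N * m + \<alpha> * (1 - \<tau>)) * (L + Lg)))"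

definition price :: "real \<Rightarrow> real \<Rightarrow> real \<Rightarrow> real \<Rightarrow> real \<Rightarrow> real \<Rightarrow> real \<Rightarrow> real \<Rightarrow> real" where
  "price N m F \<alpha> w g \<tau> Lg =
     (let L = Lpriv N m F \<alpha> g \<tau> Lg in
      (L + Lg) / (L + Lg - \<alpha> * g) * (m * w + \<alpha> * (1 - \<tau>) * w / N))"

definition profit :: "real \<Rightarrow> real \<Rightarrow> real \<Rightarrow> real \<Rightarrow> real \<Rightarrow> real \<Rightarrow> real \<Rightarrow> real \<Rightarrow> real" where
  "profit N m F \<alpha> w g \<tau> Lg =
     (let L = Lpriv N m F \<alpha> g \<tau> Lg in
      ((L + Lg) * qcons N m F \<alpha> g \<tau> Lg + g) * (price N m F \<alpha> w g \<tau> Lg - m * w) - F * w)"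

end

theory Submission imports Defs begin
lemma profit_eq:
  fixes N m F \<alpha> w g \<tau> Lg :: real
  defines "D0 \<equiv> \<alpha> + (N * m - \<alpha>) * \<tau>" and "K \<equiv> N * m + \<alpha> * (1 - \<tau>)"
    and "A \<equiv> (1 - \<tau>) * (Lg + N * F) + N * m * g" and "B \<equiv> Lg + N * F + g * (N * m - \<alpha>)"
  assumes N: "N > 0" and D0: "D0 > 0" and K: "K > 0" and B: "B > 0"
    and SD: "K * (Lg + N * F) + N^2 * m^2 * g > 0"
  shows "profit N m F \<alpha> w g \<tau> Lg = \<alpha> * w * A^2 / (N * D0 * B) - F * w"
proof -
  define L where "L = Lpriv N m F \<alpha> g \<tau> Lg"
  define S where "S = L + Lg"
  have LS: "L = N * ((1 - \<tau>) * (m * Lg + \<alpha> * F) + (m * g + F) * m * N) / D0"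
    unfolding L_def Lpriv_def D0_def by simp
  have S1: "S = (K * (Lg + N * F) + N^2 * m^2 * g) / D0"
    unfolding S_def LS using D0 by ((simp add: field_simps K_def D0_def power2_eq_square, (simp add: algebra_simps)?))
  have S2: "S - \<alpha> * g = K * B / D0"
    unfolding S1 using D0 by ((simp add: field_simps K_def D0_def B_def power2_eq_square, (simp add: algebra_simps)?))
  have Spos: "S > 0" unfolding S1 using SD D0 by simp
  have S2pos: "S - \<alpha> * g > 0" unfolding S2 using K B D0 by simp
  have q: "qcons N m F \<alpha> g \<tau> Lg = (1 - \<tau>) * (S - \<alpha> * g) / (K * S)"
    unfolding qcons_def Let_def L_def[symmetric] S_def[symmetric] K_def by simp
  have p: "price N m F \<alpha> w g \<tau> Lg = S / (S - \<alpha> * g) * (m * w + \<alpha> * (1 - \<tau>) * w / N)"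
    unfolding price_def Let_def L_def[symmetric] S_def[symmetric] by simp
  have e1: "S * qcons N m F \<alpha> g \<tau> Lg + g = ((1 - \<tau>) * S + N * m * g) / K"
    unfolding q using Spos K by (simp add: field_simps, simp add: K_def algebra_simps)
  have e2: "price N m F \<alpha> w g \<tau> Lg - m * w = \<alpha> * w * ((1 - \<tau>) * S + N * m * g) / (N * (S - \<alpha> * g))"
    unfolding p using S2pos N by ((simp add: field_simps, (simp add: algebra_simps)?))
  have X: "(1 - \<tau>) * S + N * m * g = K * A / D0"
    unfolding S1 using D0 by ((simp add: field_simps K_def D0_def A_def power2_eq_square, (simp add: algebra_simps)?))
  have "profit N m F \<alpha> w g \<tau> Lg = (S * qcons N m F \<alpha> g \<tau> Lg + g) * (price N m F \<alpha> w g \<tau> Lg - m * w) - F * w"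
    unfolding profit_def Let_def L_def[symmetric] S_def[symmetric] by simp
  also have "\<dots> = (K * A / D0 / K) * (\<alpha> * w * (K * A / D0) / (N * (K * B / D0))) - F * w"
    unfolding e1 e2 X S2 ..
  also have "\<dots> = \<alpha> * w * A^2 / (N * D0 * B) - F * w"
    using K D0 B N by ((simp add: field_simps power2_eq_square))
  finally show ?thesis .
qed
lemma pos_g:
  fixes a b c n d k k' :: real
  assumes "a > 0" "b > 0" "c > 0" "n > 0" "d > 0" "2 * k * b - a * k' > 0"
  shows "(2 * (k * a) * c * (n * d * b) - c * a^2 * (k' * (n * d))) / ((n * d * b) * (n * d * b)) > 0"
proof -
  have "2 * (k * a) * c * (n * d * b) - c * a^2 * (k' * (n * d)) = (c * n * d * a) * (2 * k * b - a * k')"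
    by (simp add: algebra_simps power2_eq_square)
  also have "\<dots> > 0" using assms by simp
  finally show ?thesis using assms by simp
qed

lemma neg_t:
  fixes a b c n d e k :: real
  assumes "a > 0" "b > 0" "c > 0" "n > 0" "d > 0" "e > 0" "k > 0"
  shows "(2 * (- e) * a * c * (n * d * b) - c * a^2 * (k * n * b)) / ((n * d * b) * (n * d * b)) < 0"
proof -
  have "2 * (- e) * a * c * (n * d * b) - c * a^2 * (k * n * b) = - ((c * n * b * a) * (2 * e * d + a * k))"
    by (simp add: algebra_simps power2_eq_square)
  also have "\<dots> < 0" using assms by (simp add: add_pos_pos)
  finally show ?thesis using assms by (simp add: divide_neg_pos)
qed

theorem theorem4:
  fixes N m F \<alpha> w g \<tau> Lg :: real
  assumes "N > 0" "m > 0" "F > 0" "\<alpha> > 0" "w > 0" "N * m > \<alpha>"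
    and "g \<ge> 0" "0 < \<tau>" "\<tau> < 1" "Lg \<ge> 0"
  shows "(\<exists>D. ((\<lambda>x. profit N m F \<alpha> w x \<tau> Lg) has_real_derivative D) (at g) \<and> D > 0)
       \<and> (\<exists>D. ((\<lambda>t. profit N m F \<alpha> w g t Lg) has_real_derivative D) (at \<tau>) \<and> D < 0)"
proof
  note a = assms
  define D0 where "D0 = \<alpha> + (N * m - \<alpha>) * \<tau>"
  define K where "K = N * m + \<alpha> * (1 - \<tau>)"
  define C where "C = Lg + N * F"
  have C: "C > 0" using a unfolding C_def by (simp add: add_nonneg_pos)
  have D0: "D0 > 0" using a unfolding D0_def by (simp add: add_pos_nonneg)
  have K: "K > 0" using a unfolding K_def by (simp add: add_pos_nonneg)
  let ?A = "\<lambda>x. (1 - \<tau>) * C + N * m * x"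
  let ?B = "\<lambda>x. C + x * (N * m - \<alpha>)"
  let ?f = "\<lambda>x. \<alpha> * w * (?A x)^2 / (N * D0 * ?B x) - F * w"
  define U where "U = {x. 0 < ?B x \<and> 0 < K * C + N^2 * m^2 * x}"
  have oU: "open U" unfolding U_def by (intro open_Collect_conj open_Collect_less continuous_intros)
  have gU: "g \<in> U" using a C K unfolding U_def by (simp add: add_pos_nonneg)
  have eqU: "profit N m F \<alpha> w x \<tau> Lg = ?f x" if "x \<in> U" for x
    using that a D0 K unfolding U_def C_def D0_def K_def by (intro profit_eq) auto
  have Bg: "?B g > 0" using gU unfolding U_def by simp
  have Ag: "?A g > 0" using a C by (simp add: add_pos_nonneg)
  define Dg where "Dg = (2 * (N * m * ?A g) * (\<alpha> * w) * (N * D0 * ?B g) - \<alpha> * w * (?A g)^2 * ((N * m - \<alpha>) * (N * D0))) / ((N * D0 * ?B g) * (N * D0 * ?B g))"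
  have "(?f has_real_derivative Dg) (at g)"
    apply (rule derivative_eq_intros refl | (use Bg a D0 in simp; fail))+
    apply (simp add: Dg_def)
    done
  then have d1: "((\<lambda>x. profit N m F \<alpha> w x \<tau> Lg) has_real_derivative Dg) (at g)"
    by (rule has_field_derivative_transform_within_open[OF _ oU gU]) (simp add: eqU)
  have key: "2 * (N * m) * ?B g - ?A g * (N * m - \<alpha>) > 0"
  proof -
    have "2 * (N * m) * ?B g - ?A g * (N * m - \<alpha>) = C * (2 * (N * m) - (1 - \<tau>) * (N * m - \<alpha>)) + N * m * g * (N * m - \<alpha>)"
      by (simp add: algebra_simps)
    moreover have "(1 - \<tau>) * (N * m - \<alpha>) < 2 * (N * m)"
    proof -
      have "(1 - \<tau>) * (N * m - \<alpha>) \<le> 1 * (N * m - \<alpha>)" using a by (intro mult_right_mono) auto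
      moreover have "1 * (N * m - \<alpha>) < 2 * (N * m)" using a mult_pos_pos[OF a(1) a(2)] by (simp add: algebra_simps)
      ultimately show ?thesis by (rule le_less_trans)
    qed
    moreover have "N * m * g * (N * m - \<alpha>) \<ge> 0" using a by simp
    ultimately show ?thesis using C by (simp add: add_pos_nonneg)
  qed
  have "Dg > 0" unfolding Dg_def
    by (rule pos_g) (use Ag Bg a D0 key in auto)
  then show "\<exists>D. ((\<lambda>x. profit N m F \<alpha> w x \<tau> Lg) has_real_derivative D) (at g) \<and> D > 0"
    using d1 by blast
  let ?A2 = "\<lambda>t. (1 - t) * C + N * m * g"
  let ?D2 = "\<lambda>t. \<alpha> + (N * m - \<alpha>) * t"
  let ?B2 = "C + g * (N * m - \<alpha>)"
  let ?f2 = "\<lambda>t. \<alpha> * w * (?A2 t)^2 / (N * ?D2 t * ?B2) - F * w"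
  define V where "V = {t::real. 0 < t \<and> t < 1}"
  have oV: "open V" unfolding V_def by (intro open_Collect_conj open_Collect_less continuous_intros)
  have tV: "\<tau> \<in> V" using a unfolding V_def by simp
  have B2: "?B2 > 0" using a C by (simp add: add_pos_nonneg)
  have eqV: "profit N m F \<alpha> w g t Lg = ?f2 t" if "t \<in> V" for t
  proof -
    have t: "0 < t" "t < 1" using that unfolding V_def by auto
    have "?D2 t > 0" using a t by (simp add: add_pos_nonneg)
    moreover have "N * m + \<alpha> * (1 - t) > 0" using a t by (simp add: add_pos_nonneg)
    moreover have "(N * m + \<alpha> * (1 - t)) * (Lg + N * F) + N^2 * m^2 * g > 0"
      using a t C calculation unfolding C_def by (simp add: add_pos_nonneg)
    ultimately show ?thesis using a B2 unfolding C_def by (intro profit_eq) auto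
  qed
  define Dt where "Dt = (2 * (- C) * ?A2 \<tau> * (\<alpha> * w) * (N * ?D2 \<tau> * ?B2) - \<alpha> * w * (?A2 \<tau>)^2 * ((N * m - \<alpha>) * N * ?B2)) / ((N * ?D2 \<tau> * ?B2) * (N * ?D2 \<tau> * ?B2))"
  have "(?f2 has_real_derivative Dt) (at \<tau>)"
    apply (rule derivative_eq_intros refl | (use B2 a D0 in \<open>simp add: D0_def\<close>; fail))+
    apply (simp add: Dt_def algebra_simps)
    done
  then have d2: "((\<lambda>t. profit N m F \<alpha> w g t Lg) has_real_derivative Dt) (at \<tau>)"
    by (rule has_field_derivative_transform_within_open[OF _ oV tV]) (simp add: eqV)
  have A2: "?A2 \<tau> > 0" using a C by (simp add: add_pos_nonneg)
  have "Dt < 0" unfolding Dt_def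
    by (rule neg_t) (use A2 B2 a C D0 in \<open>auto simp: D0_def\<close>)
  then show "\<exists>D. ((\<lambda>t. profit N m F \<alpha> w g t Lg) has_real_derivative D) (at \<tau>) \<and> D < 0"
    using d2 by blast
qed
end
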